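(* Let $\mathcal{T}$ be a microdata table with $d \ge 1$ quasi-identifier attributes and let $l$ be a positive integer. For any $\lambda \ge 1$, every $\lambda$-approximate solution to Tuple Minimization on $(\mathcal{T}, l)$ is a $(\lambda \cdot d)$-approximate solution to Star Minimization on $(\mathcal{T}, l)$.
   Context: A microdata table $\mathcal{T}$ is a multiset of $n$ tuples over $d$ categorical quasi-identifier (QI) attributes $A_1,\dots,A_d$ and one categorical sensitive attribute (SA) $B$. For an integer $l \ge 1$, a set $S$ of tuples is $l$-eligible if at most $|S|/l$ of its tuples share any identical SA value. A partition $P$ of $\mathcal{T}$ into disjoint subsets (QI-groups) defines a generalization $\mathcal{T}^*$: for each QI-group and each $i$, if all tuples of the group have the same value on $A_i$ they keep it, otherwise all their $A_i$ values are replaced by a star `*'; SA values are kept unchanged. $\mathcal{T}^*$ is $l$-diverse if every QI-group is $l$-eligible. A tuple is suppressed if at least one of its QI values is replaced by a star. Star Minimization: find an $l$-diverse generalization of $\mathcal{T}$ with the minimum number of stars. Tuple Minimization: find an $l$-diverse generalization of $\mathcal{T}$ with the minimum number of suppressed tuples. A $\lambda$-approximate solution to either problem is an $l$-diverse generalization whose objective value (number of stars, resp. number of suppressed tuples) is at most $\lambda$ times the optimal value. *)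

theory Defs
  imports Complex_Main "HOL-Library.Disjoint_Sets"
begin

(* A microdata table: a finite set T of tuple identifiers (so that the multiset of
   tuples may contain identical tuples), QI values qi t i for attributes i < d,
   and SA value sa t. *)

definition l_eligible :: "('t \<Rightarrow> 's) \<Rightarrow> nat \<Rightarrow> 't set \<Rightarrow> bool" where
  "l_eligible sa l S \<longleftrightarrow> (\<forall>s. real (card {t \<in> S. sa t = s}) \<le> real (card S) / real l)"

definition starred :: "('t \<Rightarrow> nat \<Rightarrow> 'a) \<Rightarrow> 't set \<Rightarrow> nat \<Rightarrow> bool" where
  "starred qi G i \<longleftrightarrow> (\<exists>x\<in>G. \<exists>y\<in>G. qi x i \<noteq> qi y i)"

definition l_diverse :: "'t set \<Rightarrow> ('t \<Rightarrow> 's) \<Rightarrow> nat \<Rightarrow> 't set set \<Rightarrow> bool" where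
  "l_diverse T sa l P \<longleftrightarrow> partition_on T P \<and> (\<forall>G\<in>P. l_eligible sa l G)"

definition num_stars :: "nat \<Rightarrow> ('t \<Rightarrow> nat \<Rightarrow> 'a) \<Rightarrow> 't set set \<Rightarrow> nat" where
  "num_stars d qi P = (\<Sum>G\<in>P. \<Sum>i<d. if starred qi G i then card G else 0)"

definition num_suppressed :: "nat \<Rightarrow> ('t \<Rightarrow> nat \<Rightarrow> 'a) \<Rightarrow> 't set set \<Rightarrow> nat" where
  "num_suppressed d qi P = (\<Sum>G\<in>P. if (\<exists>i<d. starred qi G i) then card G else 0)"

definition opt_value :: "'t set \<Rightarrow> ('t \<Rightarrow> 's) \<Rightarrow> nat \<Rightarrow> ('t set set \<Rightarrow> nat) \<Rightarrow> nat" where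
  "opt_value T sa l obj = Min (obj ` {P. l_diverse T sa l P})"

definition approx_solution ::
  "real \<Rightarrow> 't set \<Rightarrow> ('t \<Rightarrow> 's) \<Rightarrow> nat \<Rightarrow> ('t set set \<Rightarrow> nat) \<Rightarrow> 't set set \<Rightarrow> bool" where
  "approx_solution lam T sa l obj P \<longleftrightarrow>
     l_diverse T sa l P \<and> real (obj P) \<le> lam * real (opt_value T sa l obj)"

end

theory Submission
  imports Defs
begin

lemma grp_le1:
  "(if (\<exists>i<d. starred qi G i) then card G else 0) \<le> (\<Sum>i<d. if starred qi G i then card G else 0)"
proof (cases "\<exists>i<d. starred qi G i")
  case True
  then obtain i where i: "i<d" "starred qi G i" by blast
  have "(\<Sum>i\<in>{i}. if starred qi G i then card G else (0::nat)) \<le> (\<Sum>i<d. if starred qi G i then card G else 0)"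
    by (rule sum_mono2) (use i in auto)
  then show ?thesis using True i by simp
qed auto

lemma grp_le2:
  "(\<Sum>i<d. if starred qi G i then card G else 0) \<le> d * (if (\<exists>i<d. starred qi G i) then card G else 0)"
proof (cases "\<exists>i<d. starred qi G i")
  case True
  have "(\<Sum>i<d. if starred qi G i then card G else 0) \<le> (\<Sum>i<d. card G)"
    by (rule sum_mono) auto
  then show ?thesis using True by simp
next
  case False
  then show ?thesis by simp
qed

lemma supp_le_stars: "num_suppressed d qi Q \<le> num_stars d qi Q"
  unfolding num_suppressed_def num_stars_def by (rule sum_mono) (rule grp_le1)

lemma stars_le_supp: "num_stars d qi Q \<le> d * num_suppressed d qi Q"
  unfolding num_suppressed_def num_stars_def sum_distrib_left by (rule sum_mono) (rule grp_le2)

theorem lemma2: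
  fixes T :: "'t set" and qi :: "'t \<Rightarrow> nat \<Rightarrow> 'a" and sa :: "'t \<Rightarrow> 's"
    and d l :: nat and lam :: real and P :: "'t set set"
  assumes "finite T" and "d \<ge> 1" and "l \<ge> 1" and "lam \<ge> 1"
    and "approx_solution lam T sa l (num_suppressed d qi) P"
  shows "approx_solution (lam * real d) T sa l (num_stars d qi) P"
proof -
  let ?S = "{P. l_diverse T sa l P}"
  have div: "l_diverse T sa l P" and ap: "real (num_suppressed d qi P) \<le> lam * real (opt_value T sa l (num_suppressed d qi))"
    using assms(5) unfolding approx_solution_def by auto
  have "?S \<subseteq> Pow (Pow T)"
    unfolding l_diverse_def partition_on_def by auto
  hence fin: "finite ?S" using assms(1) by (meson finite_Pow_iff finite_subset)
  have ne: "?S \<noteq> {}" using div by auto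
  have "opt_value T sa l (num_stars d qi) \<in> num_stars d qi ` ?S"
    unfolding opt_value_def by (rule Min_in) (use fin ne in auto)
  then obtain Q where Q: "Q \<in> ?S" "opt_value T sa l (num_stars d qi) = num_stars d qi Q" by auto
  have "opt_value T sa l (num_suppressed d qi) \<le> num_suppressed d qi Q"
    unfolding opt_value_def by (rule Min_le) (use fin Q in auto)
  also have "\<dots> \<le> num_stars d qi Q" by (rule supp_le_stars)
  finally have o: "real (opt_value T sa l (num_suppressed d qi)) \<le> real (opt_value T sa l (num_stars d qi))"
    using Q by simp
  have "real (num_stars d qi P) \<le> real d * real (num_suppressed d qi P)"
    using stars_le_supp[of d qi P] by (metis of_nat_le_iff of_nat_mult)
  also have "\<dots> \<le> real d * (lam * real (opt_value T sa l (num_suppressed d qi)))"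
    using ap by (intro mult_left_mono) auto
  also have "\<dots> \<le> real d * (lam * real (opt_value T sa l (num_stars d qi)))"
    using o assms(4) by (intro mult_left_mono) auto
  finally show ?thesis unfolding approx_solution_def using div by (simp add: mult_ac)
qed

end
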